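(* Consider generating measures $\mathcal{W}_1(P, \ell)$ and $\mathcal{W}_k(P, \ell)$, which are parameterized by the same probability matrix $P$ and lengths $\ell$ but different recursion depths. Let graphs $H_1, \ldots, H_k \sim \mathcal{W}_1(P, \ell)$ be independently drawn, and denote $H_i = (V, E_i)$, with nodes labelled arbitrarily. Then the intersection graph $G = (V, \cap_{i=1}^{k} E_i) = (V, E_G) \sim \mathcal{W}_k(P, \ell)$.
   Context: Multifractal network generator (MFNG): a generating measure $\mathcal{W}_k(P, \ell)$ consists of an $m$-vector of lengths $\ell$ with $\sum_{i=1}^m \ell_i = 1$, a symmetric $m \times m$ matrix $P = (p_{ij})$ with entries in $[0,1]$, and a recursion depth $k$. The indices $1,\ldots,m$ are called categories. An undirected graph $G=(V,E)$ on $N$ nodes is distributed according to $\mathcal{W}_k(P,\ell)$ if it is generated as follows: (1) partition $[0,1]$ into $m$ subintervals of lengths $\ell_1,\ldots,\ell_m$, and recursively partition each subinterval into $m$ pieces with relative lengths $\ell_i$, to depth $k$, giving $m^k$ intervals $\ell_{i_1,\ldots,i_k}$ of length $\prod_{r=1}^k \ell_{i_r}$; (2) sample $N$ points uniformly and independently from $[0,1]$ as the nodes $x_1,\ldots,x_N$, each identified by its $k$-tuple of categories $c(x_i) = (i_1,\ldots,i_k)$ according to which nested intervals it falls into; (3) for every pair of nodes with category tuples $(i_1,\ldots,i_k)$ and $(j_1,\ldots,j_k)$, independently add the edge with probability $\prod_{r=1}^k p_{i_r j_r}$. In particular, a node's category tuple equals $(c_1,\ldots,c_k)$ with probability $\prod_{r=1}^k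 \ell_{c_r}$. *)

theory Defs
  imports "HOL-Probability.Probability"
begin

definition cat_pmf :: "nat \<Rightarrow> (nat \<Rightarrow> real) \<Rightarrow> nat pmf" where
  "cat_pmf m l = embed_pmf (\<lambda>i. if i < m then l i else 0)"

text \<open>Node set is {0..<N}; an undirected edge is stored as an ordered pair (a,b) with a < b < N.\<close>
definition node_pairs :: "nat \<Rightarrow> (nat \<times> nat) set" where
  "node_pairs N = {(a, b). a < b \<and> b < N}"

definition tuple_pmf :: "nat \<Rightarrow> (nat \<Rightarrow> real) \<Rightarrow> nat \<Rightarrow> (nat \<Rightarrow> nat) pmf" where
  "tuple_pmf m l k = Pi_pmf {..<k} 0 (\<lambda>_. cat_pmf m l)"

definition edge_prob :: "(nat \<Rightarrow> nat \<Rightarrow> real) \<Rightarrow> nat \<Rightarrow> (nat \<Rightarrow> nat) \<Rightarrow> (nat \<Rightarrow> nat) \<Rightarrow> real" where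
  "edge_prob P k c d = (\<Prod>r<k. P (c r) (d r))"

definition mfng_pmf :: "nat \<Rightarrow> nat \<Rightarrow> (nat \<Rightarrow> real) \<Rightarrow> (nat \<Rightarrow> nat \<Rightarrow> real) \<Rightarrow> nat
    \<Rightarrow> (nat \<times> nat) set pmf" where
  "mfng_pmf N m l P k =
     do {
       cs \<leftarrow> Pi_pmf {..<N} (\<lambda>_. 0) (\<lambda>_. tuple_pmf m l k);
       b \<leftarrow> Pi_pmf (node_pairs N) False
              (\<lambda>(x, y). bernoulli_pmf (edge_prob P k (cs x) (cs y)));
       return_pmf {e \<in> node_pairs N. b e}
     }"

end

theory Submission
  imports Defs
begin

lemma pmf_Pi_nested:
  assumes "finite A" "finite B"
  shows "pmf (Pi_pmf A (\<lambda>_. e) (\<lambda>i. Pi_pmf B e (f i))) g =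
    (if \<forall>i j. (i \<notin> A \<or> j \<notin> B) \<longrightarrow> g i j = e then \<Prod>i\<in>A. \<Prod>j\<in>B. pmf (f i j) (g i j) else 0)"
proof (cases "\<forall>i j. (i \<notin> A \<or> j \<notin> B) \<longrightarrow> g i j = e")
  case True
  then show ?thesis using assms
    by (subst pmf_Pi') (auto simp: pmf_Pi' intro!: prod.cong)
next
  case False
  then obtain i j where ij: "i \<notin> A \<or> j \<notin> B" "g i j \<noteq> e" by blast
  show ?thesis
  proof (cases "i \<in> A")
    case True
    with ij have "j \<notin> B" by auto
    have "pmf (Pi_pmf B e (f i)) (g i) = 0"
      using assms ij \<open>j \<notin> B\<close> by (intro pmf_Pi_outside) auto
    then have "(\<Prod>i\<in>A. pmf (Pi_pmf B e (f i)) (g i)) = 0"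
      using assms True by (intro prod_zero) auto
    then show ?thesis using False assms by (subst pmf_Pi) auto
  next
    case F: False
    have "g i \<noteq> (\<lambda>_. e)" using ij by auto
    then show ?thesis using False assms F by (subst pmf_Pi_outside) auto
  qed
qed

lemma Pi_pmf_transpose:
  assumes "finite A" "finite B"
  shows "map_pmf (\<lambda>g j i. g i j) (Pi_pmf A (\<lambda>_. e) (\<lambda>i. Pi_pmf B e (f i)))
       = Pi_pmf B (\<lambda>_. e) (\<lambda>j. Pi_pmf A e (\<lambda>i. f i j))"
proof (rule pmf_eqI)
  fix h :: "'b \<Rightarrow> 'a \<Rightarrow> 'c"
  have inj: "inj (\<lambda>(g::'a \<Rightarrow> 'b \<Rightarrow> 'c) j i. g i j)"
    by (auto simp: inj_def fun_eq_iff)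
  have h: "h = (\<lambda>j i. (\<lambda>i j. h j i) i j)" by simp
  have "pmf (map_pmf (\<lambda>g j i. g i j) (Pi_pmf A (\<lambda>_. e) (\<lambda>i. Pi_pmf B e (f i)))) h
      = pmf (Pi_pmf A (\<lambda>_. e) (\<lambda>i. Pi_pmf B e (f i))) (\<lambda>i j. h j i)"
    by (subst h, subst pmf_map_inj'[OF inj]) simp
  also have "\<dots> = pmf (Pi_pmf B (\<lambda>_. e) (\<lambda>j. Pi_pmf A e (\<lambda>i. f i j))) h"
    using assms by (simp add: pmf_Pi_nested prod.swap[of _ A B] ) (auto)
  finally show "pmf (map_pmf (\<lambda>g j i. g i j) (Pi_pmf A (\<lambda>_. e) (\<lambda>i. Pi_pmf B e (f i)))) h
      = pmf (Pi_pmf B (\<lambda>_. e) (\<lambda>j. Pi_pmf A e (\<lambda>i. f i j))) h" .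
qed

lemma bern_all:
  assumes "finite A" "\<And>i. i \<in> A \<Longrightarrow> 0 \<le> p i \<and> p i \<le> 1"
  shows "map_pmf (\<lambda>b. \<forall>i\<in>A. b i) (Pi_pmf A False (\<lambda>i. bernoulli_pmf (p i)))
       = bernoulli_pmf (\<Prod>i\<in>A. p i)"
proof -
  let ?M = "Pi_pmf A False (\<lambda>i. bernoulli_pmf (p i))"
  have p0: "0 \<le> (\<Prod>i\<in>A. p i)" using assms by (intro prod_nonneg) auto
  have p1: "(\<Prod>i\<in>A. p i) \<le> 1" using assms by (intro prod_le_1) auto
  have T: "measure_pmf.prob ?M {b. \<forall>i\<in>A. b i} = (\<Prod>i\<in>A. p i)"
  proof -
    have "{b. \<forall>i\<in>A. b i} = Pi A (\<lambda>_. {True})" by (auto simp: Pi_def)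
    then have "measure_pmf.prob ?M {b. \<forall>i\<in>A. b i} = (\<Prod>i\<in>A. measure_pmf.prob (bernoulli_pmf (p i)) {True})"
      using assms(1) by (simp add: measure_Pi_pmf_Pi)
    also have "\<dots> = (\<Prod>i\<in>A. p i)" using assms
      by (intro prod.cong) (auto simp: measure_pmf_single)
    finally show ?thesis .
  qed
  show ?thesis
  proof (rule pmf_eqI)
    fix x :: bool
    show "pmf (map_pmf (\<lambda>b. \<forall>i\<in>A. b i) ?M) x = pmf (bernoulli_pmf (\<Prod>i\<in>A. p i)) x"
    proof (cases x)
      case True
      have "(\<lambda>b. \<forall>i\<in>A. b i) -` {True} = {b. \<forall>i\<in>A. b i}" by auto
      then show ?thesis using True T p0 p1 by (simp add: pmf_map)
    next
      case False
      have "(\<lambda>b. \<forall>i\<in>A. b i) -` {False} = UNIV - {b. \<forall>i\<in>A. b i}" by auto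
      then show ?thesis using False T p0 p1
          measure_pmf.prob_compl[of "{b. \<forall>i\<in>A. b i}" ?M]
        by (simp add: pmf_map)
    qed
  qed
qed


lemma cat_support:
  assumes "\<And>i. i < m \<Longrightarrow> l i \<ge> 0" "(\<Sum>i<m. l i) = 1"
  shows "set_pmf (cat_pmf m l) \<subseteq> {..<m}"
proof -
  let ?f = "\<lambda>i. if i < m then l i else 0"
  have nn: "\<And>x. 0 \<le> ?f x" using assms by auto
  have "(\<integral>\<^sup>+x. ennreal (?f x) \<partial>count_space UNIV) = (\<integral>\<^sup>+x. ennreal (l x) * indicator {..<m} x \<partial>count_space UNIV)"
    by (intro nn_integral_cong) (auto simp: indicator_def)
  also have "\<dots> = (\<integral>\<^sup>+x. ennreal (l x) \<partial>count_space {..<m})"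
    by (simp add: nn_integral_count_space_indicator)
  also have "\<dots> = (\<Sum>x<m. ennreal (l x))" by (simp add: nn_integral_count_space_finite)
  also have "\<dots> = ennreal (\<Sum>x<m. l x)" using assms by (subst sum_ennreal) auto
  finally have int: "(\<integral>\<^sup>+x. ennreal (?f x) \<partial>count_space UNIV) = 1" using assms by simp
  show ?thesis unfolding cat_pmf_def
    using set_embed_pmf[of ?f, OF nn int] by auto
qed

theorem lemma1:
  fixes N m k :: nat and l :: "nat \<Rightarrow> real" and P :: "nat \<Rightarrow> nat \<Rightarrow> real"
  assumes "k \<ge> 1"
    and "\<And>i. i < m \<Longrightarrow> l i \<ge> 0"
    and "(\<Sum>i<m. l i) = 1"
    and "\<And>i j. i < m \<Longrightarrow> j < m \<Longrightarrow> P i j = P j i"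
    and "\<And>i j. i < m \<Longrightarrow> j < m \<Longrightarrow> 0 \<le> P i j \<and> P i j \<le> 1"
  shows "map_pmf (\<lambda>Hs. \<Inter>i\<in>{..<k}. Hs i)
           (Pi_pmf {..<k} {} (\<lambda>_. mfng_pmf N m l P 1))
         = mfng_pmf N m l P k"
proof -
  define K where "K = {..<k}"
  define NN where "NN = {..<N}"
  define pairs where "pairs = node_pairs N"
  define cat where "cat = cat_pmf m l"
  define fT where "fT = (\<lambda>c::nat. \<lambda>r::nat. if r = 0 then c else (0::nat))"
  define Bd where "Bd = (\<lambda>cs::nat \<Rightarrow> nat \<Rightarrow> nat. Pi_pmf pairs False
              (\<lambda>(x, y). bernoulli_pmf (edge_prob P 1 (cs x) (cs y))))"
  define CSd where "CSd = Pi_pmf NN (\<lambda>_. 0) (\<lambda>_. tuple_pmf m l 1)"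
  define R where "R = Pi_pmf NN (\<lambda>_. 0) (\<lambda>_. tuple_pmf m l k)"
  define \<psi> where "\<psi> = (\<lambda>G::nat \<Rightarrow> nat \<Rightarrow> nat. \<lambda>i x. fT (G x i))"
  have finK: "finite K" and finNN: "finite NN" and Kne: "K \<noteq> {}"
    using assms(1) by (auto simp: K_def NN_def lessThan_empty_iff)
  have finP: "finite pairs"
  proof -
    have "pairs \<subseteq> {..<N} \<times> {..<N}" by (auto simp: pairs_def node_pairs_def)
    then show ?thesis by (rule finite_subset) auto
  qed
  have m0: "0 < m"
  proof (rule ccontr)
    assume "\<not> 0 < m" then have "m = 0" by simp
    with assms(3) show False by simp
  qed
  have catS: "set_pmf cat \<subseteq> {..<m}" unfolding cat_def using cat_support assms(2,3) by blast

  have W1: "mfng_pmf N m l P 1 = CSd \<bind> (\<lambda>cs. Bd cs \<bind> (\<lambda>b. return_pmf {e \<in> pairs. b e}))"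
    by (simp add: mfng_pmf_def CSd_def Bd_def NN_def pairs_def)
  have Wk: "mfng_pmf N m l P k = R \<bind> (\<lambda>G. map_pmf (\<lambda>b. {e \<in> pairs. b e})
      (Pi_pmf pairs False (\<lambda>(x,y). bernoulli_pmf (\<Prod>i\<in>K. P (G x i) (G y i)))))"
    by (simp add: mfng_pmf_def R_def NN_def pairs_def map_pmf_def edge_prob_def K_def)

  have step1: "Pi_pmf K {} (\<lambda>_. mfng_pmf N m l P 1) =
     Pi_pmf K (\<lambda>_ _. (0::nat)) (\<lambda>_. CSd) \<bind> (\<lambda>CS. Pi_pmf K (\<lambda>_. False) (\<lambda>i. Bd (CS i)) \<bind>
        (\<lambda>BB. return_pmf (\<lambda>i. if i \<in> K then {e \<in> pairs. BB i e} else {})))"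
    unfolding W1
    by (simp add: Pi_pmf_bind[OF finK, where d' = "\<lambda>_ _. (0::nat)"]
                  Pi_pmf_bind[OF finK, where d' = "\<lambda>_. False"] finK)
  have step2: "map_pmf (\<lambda>Hs. \<Inter>i\<in>{..<k}. Hs i) (Pi_pmf K {} (\<lambda>_. mfng_pmf N m l P 1)) =
     Pi_pmf K (\<lambda>_ _. (0::nat)) (\<lambda>_. CSd) \<bind> (\<lambda>CS. map_pmf (\<lambda>BB. {e \<in> pairs. \<forall>i\<in>K. BB i e})
        (Pi_pmf K (\<lambda>_. False) (\<lambda>i. Bd (CS i))))"
  proof -
    have *: "(\<Inter>i\<in>K. (if i \<in> K then {e \<in> pairs. BB i e} else {})) = {e \<in> pairs. \<forall>i\<in>K. BB i e}"
      for BB :: "nat \<Rightarrow> nat \<times> nat \<Rightarrow> bool" using Kne by auto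
    have **: "(\<Inter>i\<in>K. {e \<in> pairs. BB i e}) = {e \<in> pairs. \<forall>i\<in>K. BB i e}"
      for BB :: "nat \<Rightarrow> nat \<times> nat \<Rightarrow> bool" using Kne by auto
    show ?thesis unfolding step1
      by (simp add: map_pmf_def bind_assoc_pmf bind_return_pmf * ** flip: K_def)
  qed
  have C: "Pi_pmf K (\<lambda>_ _. (0::nat)) (\<lambda>_. CSd) = map_pmf \<psi> R"
  proof -
    have T1: "tuple_pmf m l 1 = map_pmf fT cat"
      by (simp add: tuple_pmf_def Pi_pmf_singleton fT_def cat_def lessThan_Suc)
    have "CSd = map_pmf (\<lambda>h. fT \<circ> h) (Pi_pmf NN 0 (\<lambda>_. cat))"
      unfolding CSd_def T1 by (rule Pi_pmf_map[OF finNN]) (auto simp: fT_def)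
    then have "Pi_pmf K (\<lambda>_ _. (0::nat)) (\<lambda>_. CSd) =
        Pi_pmf K (\<lambda>_ _. (0::nat)) (\<lambda>_. map_pmf (\<lambda>h. fT \<circ> h) (Pi_pmf NN 0 (\<lambda>_. cat)))"
      by simp
    also have "\<dots> = map_pmf (\<lambda>H. (\<lambda>h. fT \<circ> h) \<circ> H) (Pi_pmf K (\<lambda>_. 0) (\<lambda>_. Pi_pmf NN 0 (\<lambda>_. cat)))"
      by (rule Pi_pmf_map[OF finK]) (auto simp: fT_def fun_eq_iff)
    also have "Pi_pmf K (\<lambda>_. 0) (\<lambda>_. Pi_pmf NN 0 (\<lambda>_. cat))
        = map_pmf (\<lambda>g j i. g i j) (Pi_pmf NN (\<lambda>_. 0) (\<lambda>_. Pi_pmf K 0 (\<lambda>_. cat)))"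
      using Pi_pmf_transpose[OF finNN finK, of 0 "\<lambda>_ _. cat"] by simp
    also have "Pi_pmf K 0 (\<lambda>_. cat) = tuple_pmf m l k"
      by (simp add: tuple_pmf_def K_def cat_def)
    finally show ?thesis
      by (simp add: pmf.map_comp R_def \<psi>_def o_def)
  qed
  have step3: "map_pmf (\<lambda>BB. {e \<in> pairs. \<forall>i\<in>K. BB i e}) (Pi_pmf K (\<lambda>_. False) (\<lambda>i. Bd (CS i)))
     = map_pmf (\<lambda>b. {e \<in> pairs. b e})
        (Pi_pmf pairs False (\<lambda>(x,y). bernoulli_pmf (\<Prod>i\<in>K. P (CS i x 0) (CS i y 0))))"
    if CS: "\<And>i x. CS i x 0 < m" for CS
  proof -
    define q where "q = (\<lambda>i (x,y). bernoulli_pmf (edge_prob P 1 (CS i x) (CS i y)))"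
    have "Pi_pmf K (\<lambda>_. False) (\<lambda>i. Bd (CS i)) = Pi_pmf K (\<lambda>_. False) (\<lambda>i. Pi_pmf pairs False (\<lambda>e. q i e))"
      by (simp add: Bd_def q_def)
    also have "\<dots> = map_pmf (\<lambda>g j i. g i j) (Pi_pmf pairs (\<lambda>_. False) (\<lambda>e. Pi_pmf K False (\<lambda>i. q i e)))"
      using Pi_pmf_transpose[OF finP finK, of False "\<lambda>e i. q i e"] by simp
    finally have 1: "map_pmf (\<lambda>BB. {e \<in> pairs. \<forall>i\<in>K. BB i e}) (Pi_pmf K (\<lambda>_. False) (\<lambda>i. Bd (CS i)))
       = map_pmf (\<lambda>b. {e \<in> pairs. b e})
          (map_pmf (\<lambda>BT. (\<lambda>v. \<forall>i\<in>K. v i) \<circ> BT) (Pi_pmf pairs (\<lambda>_. False) (\<lambda>e. Pi_pmf K False (\<lambda>i. q i e))))"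
      by (simp add: pmf.map_comp o_def)
    also have "map_pmf (\<lambda>BT. (\<lambda>v. \<forall>i\<in>K. v i) \<circ> BT) (Pi_pmf pairs (\<lambda>_. False) (\<lambda>e. Pi_pmf K False (\<lambda>i. q i e)))
       = Pi_pmf pairs False (\<lambda>e. map_pmf (\<lambda>v. \<forall>i\<in>K. v i) (Pi_pmf K False (\<lambda>i. q i e)))"
      by (rule Pi_pmf_map[OF finP, symmetric]) (use Kne in auto)
    also have "\<dots> = Pi_pmf pairs False (\<lambda>(x,y). bernoulli_pmf (\<Prod>i\<in>K. P (CS i x 0) (CS i y 0)))"
    proof (rule Pi_pmf_cong, simp, simp)
      fix e assume "e \<in> pairs"
      obtain x y where e: "e = (x,y)" by (cases e)
      have "map_pmf (\<lambda>v. \<forall>i\<in>K. v i) (Pi_pmf K False (\<lambda>i. q i e))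
          = map_pmf (\<lambda>v. \<forall>i\<in>K. v i) (Pi_pmf K False (\<lambda>i. bernoulli_pmf (P (CS i x 0) (CS i y 0))))"
        by (simp add: q_def e edge_prob_def)
      also have "\<dots> = bernoulli_pmf (\<Prod>i\<in>K. P (CS i x 0) (CS i y 0))"
        by (rule bern_all[OF finK]) (use CS assms(5) in auto)
      finally show "map_pmf (\<lambda>v. \<forall>i\<in>K. v i) (Pi_pmf K False (\<lambda>i. q i e))
          = (\<lambda>(x,y). bernoulli_pmf (\<Prod>i\<in>K. P (CS i x 0) (CS i y 0))) e"
        by (simp add: e)
    qed
    finally show ?thesis .
  qed
  have Rsupp: "G x i < m" if "G \<in> set_pmf R" for G x i
  proof -
    have "G \<in> PiE_dflt NN (\<lambda>_. 0) (set_pmf \<circ> (\<lambda>_. tuple_pmf m l k))"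
      using that subsetD[OF set_Pi_pmf_subset'[OF finNN, of "\<lambda>_. 0" "\<lambda>_. tuple_pmf m l k"]]
      unfolding R_def by blast
    moreover have "c \<in> set_pmf (tuple_pmf m l k) \<Longrightarrow> c i < m" for c
    proof -
      assume "c \<in> set_pmf (tuple_pmf m l k)"
      then have "c \<in> PiE_dflt {..<k} 0 (set_pmf \<circ> (\<lambda>_. cat))"
        using set_Pi_pmf_subset'[of "{..<k}" 0 "\<lambda>_. cat"] unfolding tuple_pmf_def cat_def by auto
      then show "c i < m" using catS m0 by (cases "i < k") (auto simp: PiE_dflt_def)
    qed
    ultimately show ?thesis using m0 by (cases "x \<in> NN") (auto simp: PiE_dflt_def)
  qed
  show ?thesis
    unfolding K_def[symmetric] step2[unfolded K_def[symmetric]] C Wk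
  proof (subst bind_map_pmf, rule bind_pmf_cong[OF refl])
    fix G assume G: "G \<in> set_pmf R"
    have "\<psi> G i x 0 < m" for i x using Rsupp[OF G] by (simp add: \<psi>_def fT_def)
    then show "map_pmf (\<lambda>BB. {e \<in> pairs. \<forall>i\<in>K. BB i e}) (Pi_pmf K (\<lambda>_. False) (\<lambda>i. Bd (\<psi> G i)))
      = map_pmf (\<lambda>b. {e \<in> pairs. b e}) (Pi_pmf pairs False (\<lambda>(x,y). bernoulli_pmf (\<Prod>i\<in>K. P (G x i) (G y i))))"
      by (subst step3) (auto simp: \<psi>_def fT_def)
  qed
qed

end
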